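(* Let $k$ be a field of characteristic zero. The variety $S_I\subset\mathrm{SL}(2)\times_k\mathrm{SL}(2)$ of commuting pairs, defined by $XYX^{-1}Y^{-1}=I$, is $k$-rational of dimension $4$. *)

theory Defs
  imports "HOL-Analysis.Analysis" "HOL-Library.Poly_Mapping"
          "HOL-Algebra.Algebraic_Closure_Type"
begin

text \<open>Multivariate polynomials in the variables x_0, x_1, ... with coefficients in 'a,
  represented as finitely supported maps from monomials (exponent vectors) to coefficients.\<close>
type_synonym 'a mpoly = "(nat \<Rightarrow>\<^sub>0 nat) \<Rightarrow>\<^sub>0 'a"

definition mpoly_vars :: "'a::zero mpoly \<Rightarrow> nat set" where
  "mpoly_vars p = \<Union> (Poly_Mapping.keys ` Poly_Mapping.keys p)"

definition poly_in :: "nat \<Rightarrow> 'a::zero mpoly \<Rightarrow> bool" where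
  "poly_in n p \<longleftrightarrow> mpoly_vars p \<subseteq> {..<n}"

definition meval :: "('a::zero \<Rightarrow> 'b::comm_ring_1) \<Rightarrow> 'a mpoly \<Rightarrow> 'b list \<Rightarrow> 'b" where
  "meval e p x = (\<Sum>m\<in>Poly_Mapping.keys p. e (Poly_Mapping.lookup p m) * (\<Prod>i\<in>Poly_Mapping.keys (m :: nat \<Rightarrow>\<^sub>0 nat). (x ! i) ^ Poly_Mapping.lookup m i))"

definition zariski_dense_in :: "nat \<Rightarrow> 'b::field list set \<Rightarrow> 'b list set \<Rightarrow> bool" where
  "zariski_dense_in n U V \<longleftrightarrow> U \<subseteq> V \<and>
     (\<forall>p :: 'b mpoly. poly_in n p \<longrightarrow> (\<forall>x\<in>U. meval id p x = 0) \<longrightarrow> (\<forall>x\<in>V. meval id p x = 0))"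

text \<open>V is the set of geometric points (over the algebraic closure of k) of an affine
  k-variety in affine n-space.  V is k-rational of dimension d: V is birational to affine
  d-space via rational maps defined over k.  phi : A^d --> V is given by (f_i / g),
  psi : V --> A^d by (p_j / q); both have coefficients in k; psi is defined on a dense
  open subset U of V with phi o psi = id there, and psi o phi = id on a nonempty
  (hence dense) open subset W' of A^d.\<close>
definition k_rational_of_dim :: "nat \<Rightarrow> nat \<Rightarrow> 'k::field alg_closure list set \<Rightarrow> bool" where
  "k_rational_of_dim d n V \<longleftrightarrow> V \<subseteq> {x. length x = n} \<and>
    (\<exists>(f :: nat \<Rightarrow> 'k mpoly) (g :: 'k mpoly) (p :: nat \<Rightarrow> 'k mpoly) (q :: 'k mpoly).
      (\<forall>i<n. poly_in d (f i)) \<and> poly_in d g \<and> (\<forall>j<d. poly_in n (p j)) \<and> poly_in n q \<and>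
      (let \<phi> = (\<lambda>t. map (\<lambda>i. meval to_ac (f i) t / meval to_ac g t) [0..<n]);
           \<psi> = (\<lambda>x. map (\<lambda>j. meval to_ac (p j) x / meval to_ac q x) [0..<d]);
           W = {t. length t = d \<and> meval to_ac g t \<noteq> 0};
           U = {x\<in>V. meval to_ac q x \<noteq> 0 \<and> \<psi> x \<in> W};
           W' = {t\<in>W. meval to_ac q (\<phi> t) \<noteq> 0}
       in (\<forall>t\<in>W. \<phi> t \<in> V) \<and> zariski_dense_in n U V \<and> (\<forall>x\<in>U. \<phi> (\<psi> x) = x)
          \<and> W' \<noteq> {} \<and> (\<forall>t\<in>W'. \<psi> (\<phi> t) = t)))"

definition mat2 :: "'a::zero \<Rightarrow> 'a \<Rightarrow> 'a \<Rightarrow> 'a \<Rightarrow> 'a^2^2" where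
  "mat2 a b c d = (\<chi> i j. if i = 1 then (if j = 1 then a else b) else (if j = 1 then c else d))"

text \<open>Geometric points of S_I in SL(2) x SL(2), viewed inside affine 8-space:
  coordinates (x0,..,x7) with X = [[x0,x1],[x2,x3]], Y = [[x4,x5],[x6,x7]].\<close>
definition S_I :: "'k::field alg_closure list set" where
  "S_I = {x. length x = 8 \<and>
     (let MX = mat2 (x!0) (x!1) (x!2) (x!3); MY = mat2 (x!4) (x!5) (x!6) (x!7)
      in det MX = 1 \<and> det MY = 1 \<and>
         matrix_matrix_mult (matrix_matrix_mult (matrix_matrix_mult MX MY) (matrix_inv MX)) (matrix_inv MY) = mat 1)}"

end

theory Submission
  imports Defs
begin

definition mon :: "(nat \<Rightarrow>\<^sub>0 nat) \<Rightarrow> 'b::comm_ring_1 list \<Rightarrow> 'b" where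
  "mon m x = (\<Prod>i\<in>Poly_Mapping.keys m. (x ! i) ^ Poly_Mapping.lookup m i)"

lemma mon_superset:
  assumes "finite S" "Poly_Mapping.keys m \<subseteq> S"
  shows "mon m x = (\<Prod>i\<in>S. (x ! i) ^ Poly_Mapping.lookup m i)"
  unfolding mon_def
  by (rule prod.mono_neutral_left) (use assms in \<open>auto simp: in_keys_iff\<close>)

lemma mon_add: "mon (a + b) x = mon a x * mon b x"
proof -
  let ?S = "Poly_Mapping.keys a \<union> Poly_Mapping.keys b"
  have "mon (a + b) x = (\<Prod>i\<in>?S. (x ! i) ^ Poly_Mapping.lookup (a+b) i)"
    by (rule mon_superset) (auto dest: keys_add[THEN subsetD])
  also have "\<dots> = (\<Prod>i\<in>?S. (x ! i) ^ Poly_Mapping.lookup a i) * (\<Prod>i\<in>?S. (x ! i) ^ Poly_Mapping.lookup b i)"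
    by (simp add: lookup_add power_add prod.distrib)
  also have "\<dots> = mon a x * mon b x"
    using mon_superset[of ?S a x] mon_superset[of ?S b x] by simp
  finally show ?thesis .
qed

lemma mon_zero [simp]: "mon 0 x = 1"
  by (simp add: mon_def)

lemma mon_single [simp]: "mon (Poly_Mapping.single i k) x = (x ! i) ^ k"
  by (cases "k = 0") (simp_all add: mon_def)

lemma meval_mon: "meval e p x = (\<Sum>m\<in>Poly_Mapping.keys p. e (Poly_Mapping.lookup p m) * mon m x)"
  by (simp add: meval_def mon_def)

lemma meval_superset:
  assumes "finite S" "Poly_Mapping.keys p \<subseteq> S"
  shows "meval to_ac p x = (\<Sum>m\<in>S. to_ac (Poly_Mapping.lookup p m) * mon m x)"
  unfolding meval_mon
  by (rule sum.mono_neutral_left) (use assms in \<open>auto simp: in_keys_iff\<close>)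

lemma meval_add [simp]: "meval to_ac (p + q) x = meval to_ac p x + meval to_ac q x"
proof -
  let ?S = "Poly_Mapping.keys p \<union> Poly_Mapping.keys q"
  have "meval to_ac (p + q) x = (\<Sum>m\<in>?S. to_ac (Poly_Mapping.lookup (p+q) m) * mon m x)"
    by (rule meval_superset) (auto dest: keys_add[THEN subsetD])
  also have "\<dots> = (\<Sum>m\<in>?S. to_ac (Poly_Mapping.lookup p m) * mon m x) + (\<Sum>m\<in>?S. to_ac (Poly_Mapping.lookup q m) * mon m x)"
    by (simp add: lookup_add distrib_right sum.distrib)
  also have "\<dots> = meval to_ac p x + meval to_ac q x"
    using meval_superset[of ?S p x] meval_superset[of ?S q x] by simp
  finally show ?thesis .
qed

lemma meval_zero [simp]: "meval e 0 x = 0"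
  by (simp add: meval_def)

lemma meval_single [simp]: "meval to_ac (Poly_Mapping.single m c) x = to_ac c * mon m x"
  by (cases "c = 0") (simp_all add: meval_mon)

lemma meval_sum: "finite A \<Longrightarrow> meval to_ac (\<Sum>a\<in>A. f a) x = (\<Sum>a\<in>A. meval to_ac (f a) x)"
  by (induction A rule: finite_induct) auto

lemma pm_as_sum: "p = (\<Sum>m\<in>Poly_Mapping.keys p. Poly_Mapping.single m (Poly_Mapping.lookup p m))"
  by (rule poly_mapping_eqI) (simp add: lookup_sum lookup_single when_def in_keys_iff)

lemma meval_mult [simp]:
  fixes p q :: "'k::field mpoly"
  shows "meval to_ac (p * q) x = meval to_ac p x * meval to_ac q x"
proof -
  have "p * q = (\<Sum>m\<in>Poly_Mapping.keys p. Poly_Mapping.single m (Poly_Mapping.lookup p m)) *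
                (\<Sum>n\<in>Poly_Mapping.keys q. Poly_Mapping.single n (Poly_Mapping.lookup q n))"
    using pm_as_sum[of p] pm_as_sum[of q] by simp
  also have "\<dots> = (\<Sum>m\<in>Poly_Mapping.keys p. \<Sum>n\<in>Poly_Mapping.keys q.
      Poly_Mapping.single (m + n) (Poly_Mapping.lookup p m * Poly_Mapping.lookup q n))"
    by (simp add: sum_distrib_left sum_distrib_right mult_single) (rule sum.swap)
  finally have "meval to_ac (p * q) x = (\<Sum>m\<in>Poly_Mapping.keys p. \<Sum>n\<in>Poly_Mapping.keys q.
      to_ac (Poly_Mapping.lookup p m) * mon m x * (to_ac (Poly_Mapping.lookup q n) * mon n x))"
    by (simp add: meval_sum mon_add mult_ac)
  also have "\<dots> = meval to_ac p x * meval to_ac q x"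
    by (simp add: meval_mon sum_distrib_left sum_distrib_right) (rule sum.swap)
  finally show ?thesis .
qed

definition Var :: "nat \<Rightarrow> 'a::{zero,one} mpoly" where
  "Var i = Poly_Mapping.single (Poly_Mapping.single i 1) 1"
definition Const :: "'a::zero \<Rightarrow> 'a mpoly" where
  "Const c = Poly_Mapping.single 0 c"

lemma meval_Var [simp]: "meval to_ac (Var i :: 'k::field mpoly) x = x ! i"
  by (simp add: Var_def)
lemma meval_Const [simp]: "meval to_ac (Const c :: 'k::field mpoly) x = to_ac c"
  by (simp add: Const_def)
lemma meval_one [simp]: "meval to_ac (1 :: 'k::field mpoly) x = 1"
  by (simp add: single_one[symmetric] del: single_one)
lemma meval_uminus [simp]: "meval to_ac (- p :: 'k::field mpoly) x = - meval to_ac p x"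
proof -
  have "- p = Const (-1) * p" by (simp add: Const_def mult_single[symmetric]
     single_uminus single_one[symmetric] del: single_one)
  then show ?thesis by simp
qed
lemma meval_diff [simp]: "meval to_ac (p - q :: 'k::field mpoly) x = meval to_ac p x - meval to_ac q x"
  using meval_add[of p "-q"] by simp
lemma meval_power [simp]: "meval to_ac (p ^ n :: 'k::field mpoly) x = meval to_ac p x ^ n"
  by (induction n) auto

lemma vars_add: "mpoly_vars (p + q) \<subseteq> mpoly_vars p \<union> mpoly_vars q"
  unfolding mpoly_vars_def using keys_add[of p q] by auto

lemma keys_mult_nat: "Poly_Mapping.keys (a + b :: nat \<Rightarrow>\<^sub>0 nat) \<subseteq> Poly_Mapping.keys a \<union> Poly_Mapping.keys b"
  by (rule keys_add)

lemma vars_mult: "mpoly_vars (p * q :: 'a::comm_ring_1 mpoly) \<subseteq> mpoly_vars p \<union> mpoly_vars q"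
proof
  fix i assume "i \<in> mpoly_vars (p * q)"
  then obtain m where m: "m \<in> Poly_Mapping.keys (p * q)" "i \<in> Poly_Mapping.keys m"
    unfolding mpoly_vars_def by auto
  from m(1) obtain a b where ab: "m = a + b" "a \<in> Poly_Mapping.keys p" "b \<in> Poly_Mapping.keys q"
    using keys_mult[of p q] by blast
  from m(2) ab(1) have "i \<in> Poly_Mapping.keys a \<or> i \<in> Poly_Mapping.keys b"
    using keys_mult_nat[of a b] by auto
  with ab show "i \<in> mpoly_vars p \<union> mpoly_vars q" unfolding mpoly_vars_def by auto
qed

lemma keys_uminus_pm: "Poly_Mapping.keys (- p :: 'a \<Rightarrow>\<^sub>0 'b::ab_group_add) = Poly_Mapping.keys p"
  by (auto simp: in_keys_iff)

lemma keys_minus_pm: "Poly_Mapping.keys (p - q :: 'a \<Rightarrow>\<^sub>0 'b::ab_group_add) \<subseteq> Poly_Mapping.keys p \<union> Poly_Mapping.keys q"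
  by (auto simp: in_keys_iff lookup_minus)

lemma poly_in_add [intro]: "poly_in n p \<Longrightarrow> poly_in n q \<Longrightarrow> poly_in n (p + q)"
  unfolding poly_in_def using vars_add[of p q] by auto
lemma poly_in_mult [intro]: "poly_in n p \<Longrightarrow> poly_in n q \<Longrightarrow> poly_in n (p * q :: 'a::comm_ring_1 mpoly)"
  unfolding poly_in_def using vars_mult[of p q] by auto
lemma poly_in_uminus [intro]: "poly_in n p \<Longrightarrow> poly_in n (- p :: 'a::ab_group_add mpoly)"
  unfolding poly_in_def mpoly_vars_def by (simp add: keys_uminus_pm)
lemma poly_in_diff [intro]: "poly_in n p \<Longrightarrow> poly_in n q \<Longrightarrow> poly_in n (p - q :: 'a::ab_group_add mpoly)"
  unfolding poly_in_def mpoly_vars_def using keys_minus_pm[of p q] by (auto 0 3)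
lemma poly_in_one [intro]: "poly_in n (1 :: 'a::comm_ring_1 mpoly)"
  unfolding poly_in_def mpoly_vars_def by (simp add: single_one[symmetric] del: single_one)
lemma poly_in_power [intro]: "poly_in n p \<Longrightarrow> poly_in n (p ^ k :: 'a::comm_ring_1 mpoly)"
  by (induction k) auto
lemma poly_in_Var [intro]: "i < n \<Longrightarrow> poly_in n (Var i :: 'a::comm_ring_1 mpoly)"
  unfolding poly_in_def mpoly_vars_def Var_def by simp
lemma poly_in_Const [intro]: "poly_in n (Const c)"
  unfolding poly_in_def mpoly_vars_def Const_def by (cases "c = 0") simp_all

definition good_at :: "'a::field \<Rightarrow> ('a \<Rightarrow> 'a) \<Rightarrow> bool" where
  "good_at b f \<longleftrightarrow> (\<exists>P Q. poly Q b \<noteq> 0 \<and> (\<forall>s. poly Q s \<noteq> 0 \<longrightarrow> f s = poly P s / poly Q s))"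

lemma good_const [intro]: "good_at b (\<lambda>s. c)"
  unfolding good_at_def by (rule exI[of _ "[:c:]"], rule exI[of _ 1]) simp

lemma good_id [intro]: "good_at b (\<lambda>s. s)"
  unfolding good_at_def by (rule exI[of _ "[:0,1:]"], rule exI[of _ 1]) simp

lemma good_add [intro]:
  assumes "good_at b f" "good_at b g" shows "good_at b (\<lambda>s. f s + g s)"
proof -
  obtain P1 Q1 where 1: "poly Q1 b \<noteq> 0" "\<forall>s. poly Q1 s \<noteq> 0 \<longrightarrow> f s = poly P1 s / poly Q1 s"
    using assms(1) unfolding good_at_def by blast
  obtain P2 Q2 where 2: "poly Q2 b \<noteq> 0" "\<forall>s. poly Q2 s \<noteq> 0 \<longrightarrow> g s = poly P2 s / poly Q2 s"
    using assms(2) unfolding good_at_def by blast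
  show ?thesis unfolding good_at_def
    by (rule exI[of _ "P1 * Q2 + P2 * Q1"], rule exI[of _ "Q1 * Q2"]) (use 1 2 in \<open>auto simp: field_simps\<close>)
qed

lemma good_mult [intro]:
  assumes "good_at b f" "good_at b g" shows "good_at b (\<lambda>s. f s * g s)"
proof -
  obtain P1 Q1 where 1: "poly Q1 b \<noteq> 0" "\<forall>s. poly Q1 s \<noteq> 0 \<longrightarrow> f s = poly P1 s / poly Q1 s"
    using assms(1) unfolding good_at_def by blast
  obtain P2 Q2 where 2: "poly Q2 b \<noteq> 0" "\<forall>s. poly Q2 s \<noteq> 0 \<longrightarrow> g s = poly P2 s / poly Q2 s"
    using assms(2) unfolding good_at_def by blast
  show ?thesis unfolding good_at_def
    by (rule exI[of _ "P1 * P2"], rule exI[of _ "Q1 * Q2"]) (use 1 2 in \<open>auto simp: field_simps\<close>)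
qed

lemma good_uminus [intro]:
  assumes "good_at b f" shows "good_at b (\<lambda>s. - f s)"
  using good_mult[OF good_const[of b "-1"] assms] by simp

lemma good_diff [intro]:
  assumes "good_at b f" "good_at b g" shows "good_at b (\<lambda>s. f s - g s)"
  using good_add[OF assms(1) good_uminus[OF assms(2)]] by simp

lemma good_power [intro]:
  assumes "good_at b f" shows "good_at b (\<lambda>s. f s ^ n)"
  by (induction n) (use assms in auto)

lemma good_div [intro]:
  assumes "good_at b f" "good_at b g" "g b \<noteq> 0" shows "good_at b (\<lambda>s. f s / g s)"
proof -
  obtain P1 Q1 where 1: "poly Q1 b \<noteq> 0" "\<forall>s. poly Q1 s \<noteq> 0 \<longrightarrow> f s = poly P1 s / poly Q1 s"
    using assms(1) unfolding good_at_def by blast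
  obtain P2 Q2 where 2: "poly Q2 b \<noteq> 0" "\<forall>s. poly Q2 s \<noteq> 0 \<longrightarrow> g s = poly P2 s / poly Q2 s"
    using assms(2) unfolding good_at_def by blast
  have "poly P2 b \<noteq> 0" using 2 assms(3) by auto
  have *: "f s / g s = poly (P1 * Q2 * Q2) s / poly (Q1 * Q2 * P2) s"
    if "poly (Q1 * Q2 * P2) s \<noteq> 0" for s
  proof -
    have nz: "poly Q1 s \<noteq> 0" "poly Q2 s \<noteq> 0" "poly P2 s \<noteq> 0" using that by auto
    have e: "f s = poly P1 s / poly Q1 s" "g s = poly P2 s / poly Q2 s" using 1 2 nz by auto
    show ?thesis unfolding e using nz by (simp add: field_simps)
  qed
  show ?thesis unfolding good_at_def
    by (rule exI[of _ "P1 * Q2 * Q2"], rule exI[of _ "Q1 * Q2 * P2"])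
       (use 1 2 \<open>poly P2 b \<noteq> 0\<close> * in auto)
qed

lemma good_sum [intro]:
  assumes "\<And>a. a \<in> A \<Longrightarrow> good_at b (f a)" shows "good_at b (\<lambda>s. \<Sum>a\<in>A. f a s)"
proof (cases "finite A")
  case True
  then show ?thesis using assms by (induction A rule: finite_induct) auto
qed auto

lemma good_prod [intro]:
  assumes "\<And>a. a \<in> A \<Longrightarrow> good_at b (f a)" shows "good_at b (\<lambda>s. \<Prod>a\<in>A. f a s)"
proof (cases "finite A")
  case True
  then show ?thesis using assms by (induction A rule: finite_induct) auto
qed auto

lemma good_cofinite:
  assumes "good_at b f" "f b \<noteq> 0" shows "finite {s. f s = 0}"
proof -
  obtain P Q where 1: "poly Q b \<noteq> 0" "\<forall>s. poly Q s \<noteq> 0 \<longrightarrow> f s = poly P s / poly Q s"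
    using assms(1) unfolding good_at_def by blast
  have "poly P b \<noteq> 0" using 1 assms(2) by auto
  hence "P \<noteq> 0" "Q \<noteq> 0" using 1 by auto
  hence "finite ({s. poly P s = 0} \<union> {s. poly Q s = 0})" by (simp add: poly_roots_finite)
  moreover have "{s. f s = 0} \<subseteq> {s. poly P s = 0} \<union> {s. poly Q s = 0}" using 1 by auto
  ultimately show ?thesis by (rule finite_subset[rotated])
qed

lemma good_vanish:
  fixes f :: "'a::field_char_0 \<Rightarrow> 'a"
  assumes "good_at b f" "finite B" "\<And>s. s \<notin> B \<Longrightarrow> f s = 0" shows "f b = 0"
proof -
  obtain P Q where 1: "poly Q b \<noteq> 0" "\<forall>s. poly Q s \<noteq> 0 \<longrightarrow> f s = poly P s / poly Q s"
    using assms(1) unfolding good_at_def by blast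
  have "Q \<noteq> 0" using 1 by auto
  hence fin: "finite (B \<union> {s. poly Q s = 0})" using assms(2) by (simp add: poly_roots_finite)
  have sub: "UNIV - (B \<union> {s. poly Q s = 0}) \<subseteq> {s. poly P s = 0}"
    using 1 assms(3) by auto
  have "infinite (UNIV - (B \<union> {s. poly Q s = 0}))"
    using fin infinite_UNIV_char_0 by (simp add: Diff_infinite_finite)
  hence "infinite {s. poly P s = 0}" using sub finite_subset by blast
  hence "P = 0" using poly_roots_finite by blast
  thus ?thesis using 1 by simp
qed

lemma nth_beyond: "length xs \<le> i \<Longrightarrow> xs ! i = [] ! (i - length xs)"
proof (induction xs arbitrary: i)
  case (Cons a xs) then show ?case by (cases i) auto
qed simp

lemma good_meval:
  fixes xs :: "'a::field \<Rightarrow> 'a list" and ee :: "'c::zero \<Rightarrow> 'a"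
  assumes "\<And>i. good_at b (\<lambda>s. xs s ! i)"
  shows "good_at b (\<lambda>s. meval ee p (xs s))"
  unfolding meval_def by (intro good_sum good_mult good_const good_prod good_power assms)

lemma mat2_nth: "mat2 a b c d $ 1 $ 1 = a" "mat2 a b c d $ 1 $ 2 = b"
   "mat2 a b c d $ 2 $ 1 = c" "mat2 a b c d $ 2 $ 2 = d"
  by (simp_all add: mat2_def)

lemma mat2_eq_iff: "mat2 a b c d = mat2 a' b' c' d' \<longleftrightarrow> a = a' \<and> b = b' \<and> c = c' \<and> d = d'"
  by (auto simp: vec_eq_iff forall_2 mat2_nth)

lemma mat2_mult: "(mat2 a b c d :: 'a::comm_ring_1^2^2) ** mat2 e f g h =
   mat2 (a*e+b*g) (a*f+b*h) (c*e+d*g) (c*f+d*h)"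
  by (simp add: vec_eq_iff forall_2 matrix_matrix_mult_def sum_2 mat2_nth)

lemma mat2_one: "(mat 1 :: 'a::comm_ring_1^2^2) = mat2 1 0 0 1"
  by (simp add: vec_eq_iff forall_2 mat_def mat2_def)

lemma det_mat2: "det (mat2 a b c d :: 'a::comm_ring_1^2^2) = a * d - b * c"
  by (simp add: det_2 mat2_nth)

lemma matrix_inv_eq: "(A::'a::comm_ring_1^'n^'n) ** B = mat 1 \<Longrightarrow> B ** A = mat 1 \<Longrightarrow> matrix_inv A = B"
proof -
  assume 1: "A ** B = mat 1" and 2: "B ** A = mat 1"
  have ex: "\<exists>A'. A ** A' = mat 1 \<and> A' ** A = mat 1" using 1 2 by blast
  define C where "C = matrix_inv A"
  have C: "A ** C = mat 1" "C ** A = mat 1"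
    using someI_ex[OF ex] unfolding C_def matrix_inv_def by auto
  have "C = C ** (A ** B)" by (simp add: 1)
  also have "\<dots> = (C ** A) ** B" by (simp add: matrix_mul_assoc)
  also have "\<dots> = B" by (simp add: C)
  finally show ?thesis unfolding C_def .
qed

lemma matrix_inv_mat2: "a * d - b * c = (1::'a::comm_ring_1) \<Longrightarrow> matrix_inv (mat2 a b c d) = mat2 d (-b) (-c) a"
  by (rule matrix_inv_eq) (simp_all add: mat2_mult mat2_one mat2_eq_iff algebra_simps)

lemma comm_iff:
  fixes MX MY MXi MYi :: "'a::comm_ring_1^2^2"
  assumes "MX ** MXi = mat 1" "MXi ** MX = mat 1" "MY ** MYi = mat 1" "MYi ** MY = mat 1"
  shows "((MX ** MY) ** MXi) ** MYi = mat 1 \<longleftrightarrow> MX ** MY = MY ** MX"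
proof
  assume h: "((MX ** MY) ** MXi) ** MYi = mat 1"
  have "(MX ** MY) ** MXi = (((MX ** MY) ** MXi) ** MYi) ** MY" by (simp add: assms matrix_mul_assoc[symmetric])
  also have "\<dots> = MY" by (simp add: h)
  finally have "((MX ** MY) ** MXi) ** MX = MY ** MX" by simp
  thus "MX ** MY = MY ** MX" by (simp add: assms matrix_mul_assoc[symmetric])
next
  assume h: "MX ** MY = MY ** MX"
  show "((MX ** MY) ** MXi) ** MYi = mat 1" unfolding h by (simp add: assms matrix_mul_assoc[symmetric])
qed

lemma S_I_iff: "x \<in> (S_I :: 'k::field alg_closure list set) \<longleftrightarrow> length x = 8 \<and>
   x!0*x!3 - x!1*x!2 = 1 \<and> x!4*x!7 - x!5*x!6 = 1 \<and> x!1*x!6 = x!5*x!2 \<and>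
   x!0*x!5 + x!1*x!7 = x!4*x!1 + x!5*x!3 \<and> x!2*x!4 + x!3*x!6 = x!6*x!0 + x!7*x!2"
proof -
  let ?MX = "mat2 (x!0) (x!1) (x!2) (x!3)" and ?MY = "mat2 (x!4) (x!5) (x!6) (x!7)"
  have *: "(det ?MX = 1 \<and> det ?MY = 1 \<and> ((?MX ** ?MY) ** matrix_inv ?MX) ** matrix_inv ?MY = mat 1) \<longleftrightarrow>
     (x!0*x!3 - x!1*x!2 = 1 \<and> x!4*x!7 - x!5*x!6 = 1 \<and> ?MX ** ?MY = ?MY ** ?MX)"
  proof (cases "x!0*x!3 - x!1*x!2 = 1 \<and> x!4*x!7 - x!5*x!6 = 1")
    case True
    then show ?thesis
      by (subst comm_iff) (simp_all add: det_mat2 matrix_inv_mat2 mat2_mult mat2_one mat2_eq_iff algebra_simps)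
  qed (auto simp: det_mat2)
  show ?thesis unfolding S_I_def mem_Collect_eq Let_def * by (auto simp: mat2_mult mat2_eq_iff algebra_simps)
qed

definition Ef :: "'a::field \<Rightarrow> 'a \<Rightarrow> 'a \<Rightarrow> 'a \<Rightarrow> 'a" where
  "Ef t0 t1 t2 m = t0*m^2 + m*(t0^2+1+t1*t2) + t0"
definition Nf :: "'a::field \<Rightarrow> 'a \<Rightarrow> 'a \<Rightarrow> 'a \<Rightarrow> 'a" where
  "Nf t0 t1 t2 m = 2*m*t0 + (t0^2+1+t1*t2)"

definition phiL :: "'a::field \<Rightarrow> 'a \<Rightarrow> 'a \<Rightarrow> 'a \<Rightarrow> 'a list" where
  "phiL t0 t1 t2 m = (let E = Ef t0 t1 t2 m; N = Nf t0 t1 t2 m; g = t0 * E in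
     [t0^2*E/g, t0*t1*E/g, t0*t2*E/g, (1+t1*t2)*E/g, (t0^2*(1-m^2) - t0^2*N)/g,
      -(N*t1*t0)/g, -(N*t2*t0)/g, (t0^2*(1-m^2) - N*(1+t1*t2))/g])"

lemma phiL_in:
  assumes "t0 * Ef t0 t1 t2 m \<noteq> 0"
  shows "phiL t0 t1 t2 m \<in> (S_I :: 'k::field alg_closure list set)"
proof -
  define E where "E = Ef t0 t1 t2 m"
  define N where "N = Nf t0 t1 t2 m"
  define g where "g = t0 * E"
  have g0: "g \<noteq> 0" using assms by (simp add: g_def E_def)
  have t0: "t0 \<noteq> 0" and E0: "E \<noteq> 0" using g0 by (auto simp: g_def)
  have Ee: "E = t0*m^2 + m*(t0^2+1+t1*t2) + t0" by (simp add: E_def Ef_def)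
  have Ne: "N = 2*m*t0 + (t0^2+1+t1*t2)" by (simp add: N_def Nf_def)
  have l: "phiL t0 t1 t2 m = [t0^2*E/g, t0*t1*E/g, t0*t2*E/g, (1+t1*t2)*E/g, (t0^2*(1-m^2) - t0^2*N)/g,
      -(N*t1*t0)/g, -(N*t2*t0)/g, (t0^2*(1-m^2) - N*(1+t1*t2))/g]"
    by (simp add: phiL_def E_def N_def g_def Let_def)
  show ?thesis unfolding S_I_iff l
    apply (simp add: field_simps g0)
    apply (simp add: g_def Ee Ne)
    apply (intro conjI; Groebner_Basis.algebra)
    done
qed

lemma phi_psi:
  fixes x :: "'k::field alg_closure list"
  assumes x: "x \<in> S_I" and nz: "x!0 * x!1 * x!5 \<noteq> 0"
    and m: "m = (x!1*(x!4-1) - x!0*x!5) / x!5" and g: "x!0 * Ef (x!0) (x!1) (x!2) m \<noteq> 0"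
  shows "phiL (x!0) (x!1) (x!2) m = x"
proof -
  obtain x0 x1 x2 x3 x4 x5 x6 x7 where xe: "x = [x0,x1,x2,x3,x4,x5,x6,x7]"
  proof -
    have "length x = 8" using x by (simp add: S_I_iff)
    then show ?thesis using that
      by (auto simp: length_Suc_conv numeral_eq_Suc)
  qed
  have e: "x0*x3 - x1*x2 = 1" "x4*x7 - x5*x6 = 1" "x1*x6 = x5*x2"
     "x0*x5 + x1*x7 = x4*x1 + x5*x3" "x2*x4 + x3*x6 = x6*x0 + x7*x2"
    using x unfolding S_I_iff xe by simp_all
  have n0: "x0 \<noteq> 0" "x1 \<noteq> 0" "x5 \<noteq> 0" using nz by (simp_all add: xe)
  have me: "m * x5 = x1*(x4-1) - x0*x5" using m n0 by (simp add: xe field_simps)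
  define E where "E = Ef x0 x1 x2 m"
  have E0: "E \<noteq> 0" using g by (simp add: xe E_def)
  have Ee: "E = x0*m^2 + m*(x0^2+1+x1*x2) + x0" by (simp add: E_def Ef_def)
  define N where "N = Nf x0 x1 x2 m"
  have Ne: "N = 2*m*x0 + (x0^2+1+x1*x2)" by (simp add: N_def Nf_def)
  have l: "phiL x0 x1 x2 m = [x0^2*E/(x0*E), x0*x1*E/(x0*E), x0*x2*E/(x0*E), (1+x1*x2)*E/(x0*E),
     (x0^2*(1-m^2) - x0^2*N)/(x0*E),
      -(N*x1*x0)/(x0*E), -(N*x2*x0)/(x0*E), (x0^2*(1-m^2) - N*(1+x1*x2))/(x0*E)]"
    by (simp add: phiL_def E_def N_def Let_def)
  have f4: "x0^2*(1-m^2) - x0^2*N = x4 * (x0 * E)"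
    using e me n0 unfolding Ee Ne by Groebner_Basis.algebra
  have f5: "-(N*x1*x0) = x5 * (x0 * E)"
    using e me n0 unfolding Ee Ne by Groebner_Basis.algebra
  have f6: "-(N*x2*x0) = x6 * (x0 * E)"
    using e me n0 unfolding Ee Ne by Groebner_Basis.algebra
  have f7: "x0^2*(1-m^2) - N*(1+x1*x2) = x7 * (x0 * E)"
    using e me n0 unfolding Ee Ne by Groebner_Basis.algebra
  have f3: "(1+x1*x2)*E = x3 * (x0*E)"
    using e by (simp add: algebra_simps)
  have d: "\<And>u v. u = v * (x0*E) \<Longrightarrow> u/(x0*E) = v" using n0 E0 by simp
  have "phiL x0 x1 x2 m = [x0,x1,x2,x3,x4,x5,x6,x7]"
    unfolding l list.inject
    by (intro conjI TrueI d f3 f4 f5 f6 f7) (simp_all add: power2_eq_square)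
  then show ?thesis by (simp add: xe)
qed

definition Sm :: "'k::field mpoly" where "Sm = Var 0 ^ 2 + 1 + Var 1 * Var 2"
definition Em :: "'k::field mpoly" where "Em = Var 0 * Var 3 ^ 2 + Var 3 * Sm + Var 0"
definition Nm :: "'k::field mpoly" where "Nm = Const 2 * Var 3 * Var 0 + Sm"
definition gm :: "'k::field mpoly" where "gm = Var 0 * Em"
definition fl :: "'k::field mpoly list" where
  "fl = [Var 0 ^ 2 * Em, Var 0 * Var 1 * Em, Var 0 * Var 2 * Em, (1 + Var 1 * Var 2) * Em,
         Var 0 ^ 2 * (1 - Var 3 ^ 2) - Var 0 ^ 2 * Nm, - (Nm * Var 1 * Var 0), - (Nm * Var 2 * Var 0),
         Var 0 ^ 2 * (1 - Var 3 ^ 2) - Nm * (1 + Var 1 * Var 2)]"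
definition qm :: "'k::field mpoly" where "qm = Var 0 * Var 1 * Var 5"
definition pl :: "'k::field mpoly list" where
  "pl = [Var 0 * qm, Var 1 * qm, Var 2 * qm, Var 0 * Var 1 * (Var 1 * (Var 4 - 1) - Var 0 * Var 5)]"

definition psiL :: "'a::field list \<Rightarrow> 'a list" where
  "psiL x = (let q = x!0 * x!1 * x!5 in
     [x!0 * q / q, x!1 * q / q, x!2 * q / q, x!0 * x!1 * (x!1 * (x!4 - 1) - x!0 * x!5) / q])"

lemma upt8: "[0..<8] = [0,1,2,3,4,5,6,7::nat]" by (simp add: upt_rec)
lemma upt4: "[0..<4] = [0,1,2,3::nat]" by (simp add: upt_rec)

lemma meval_Em: "meval to_ac (Em :: 'k::field mpoly) t = Ef (t!0) (t!1) (t!2) (t!3)"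
  by (simp add: Em_def Sm_def Ef_def)
lemma meval_Nm: "meval to_ac (Nm :: 'k::field mpoly) t = Nf (t!0) (t!1) (t!2) (t!3)"
  by (simp add: Nm_def Sm_def Nf_def)
lemma meval_gm: "meval to_ac (gm :: 'k::field mpoly) t = t!0 * Ef (t!0) (t!1) (t!2) (t!3)"
  by (simp add: gm_def meval_Em)
lemma meval_qm: "meval to_ac (qm :: 'k::field mpoly) x = x!0 * x!1 * x!5"
  by (simp add: qm_def)

lemma phi_eval: "map (\<lambda>i. meval to_ac ((fl :: 'k::field mpoly list) ! i) t / meval to_ac gm t) [0..<8]
   = phiL (t!0) (t!1) (t!2) (t!3)"
  by (simp add: upt8 fl_def meval_Em meval_Nm meval_gm phiL_def Let_def)

lemma psi_eval: "map (\<lambda>j. meval to_ac ((pl :: 'k::field mpoly list) ! j) x / meval to_ac qm x) [0..<4]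
   = psiL x"
  by (simp add: upt4 pl_def meval_qm psiL_def Let_def)

lemma poly_in_fl: "i < 8 \<Longrightarrow> poly_in 4 ((fl :: 'k::field mpoly list) ! i)"
  unfolding fl_def Em_def Nm_def Sm_def
  by (auto simp: less_Suc_eq numeral_eq_Suc intro!: poly_in_add poly_in_mult poly_in_diff
      poly_in_uminus poly_in_power poly_in_Var poly_in_Const poly_in_one)
lemma poly_in_gm: "poly_in 4 (gm :: 'k::field mpoly)"
  unfolding gm_def Em_def Sm_def
  by (intro poly_in_add poly_in_mult poly_in_diff poly_in_uminus poly_in_power poly_in_Var poly_in_Const poly_in_one) auto
lemma poly_in_qm: "poly_in 8 (qm :: 'k::field mpoly)"
  unfolding qm_def
  by (intro poly_in_add poly_in_mult poly_in_diff poly_in_uminus poly_in_power poly_in_Var poly_in_Const poly_in_one) auto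
lemma poly_in_pl: "j < 4 \<Longrightarrow> poly_in 8 ((pl :: 'k::field mpoly list) ! j)"
  unfolding pl_def qm_def
  by (auto simp: less_Suc_eq numeral_eq_Suc intro!: poly_in_add poly_in_mult poly_in_diff
      poly_in_uminus poly_in_power poly_in_Var poly_in_Const poly_in_one)

lemma psi_phi:
  fixes t0 t1 t2 m :: "'a::field"
  assumes g: "t0 * Ef t0 t1 t2 m \<noteq> 0" and q: "phiL t0 t1 t2 m ! 0 * phiL t0 t1 t2 m ! 1 * phiL t0 t1 t2 m ! 5 \<noteq> 0"
  shows "psiL (phiL t0 t1 t2 m) = [t0, t1, t2, m]"
proof -
  define E where "E = Ef t0 t1 t2 m"
  define N where "N = Nf t0 t1 t2 m"
  have t0: "t0 \<noteq> 0" and E0: "E \<noteq> 0" using g by (auto simp: E_def)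
  have Ee: "E = t0*m^2 + m*(t0^2+1+t1*t2) + t0" by (simp add: E_def Ef_def)
  have Ne: "N = 2*m*t0 + (t0^2+1+t1*t2)" by (simp add: N_def Nf_def)
  have l: "phiL t0 t1 t2 m = [t0, t1, t2, (1+t1*t2)/t0, (t0^2*(1-m^2) - t0^2*N)/(t0*E),
      -(N*t1*t0)/(t0*E), -(N*t2*t0)/(t0*E), (t0^2*(1-m^2) - N*(1+t1*t2))/(t0*E)]"
    using t0 E0 by (simp add: phiL_def E_def N_def Let_def power2_eq_square)
  have nz: "t1 \<noteq> 0" "N \<noteq> 0" using q t0 E0 unfolding l by auto
  have key: "t0 * t1 * (t1 * ((t0^2*(1-m^2) - t0^2*N)/(t0*E) - 1) - t0 * (-(N*t1*t0)/(t0*E)))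
       = m * (t0 * t1 * (-(N*t1*t0)/(t0*E)))"
  proof -
    have "t0 * t1 * (t1 * ((t0^2*(1-m^2) - t0^2*N)/(t0*E) - 1) - t0 * (-(N*t1*t0)/(t0*E)))
       = t0 * t1 * t1 * (t0^2*(1-m^2) - t0^2*N - t0*E + t0*N*t0) / (t0*E)"
      using t0 E0 by (simp add: field_simps)
    also have "t0^2*(1-m^2) - t0^2*N - t0*E + t0*N*t0 = -(m*N*t0)"
      unfolding Ee Ne by (simp add: algebra_simps power2_eq_square)
    finally show ?thesis using t0 E0 by (simp add: field_simps)
  qed
  show ?thesis using q key unfolding l psiL_def Let_def
    by (simp add: nz t0)
qed

lemma W'_witness:
  "let t = [1, 1, -1, 0 :: 'k::field alg_closure] in
    length t = 4 \<and> t!0 * Ef (t!0) (t!1) (t!2) (t!3) \<noteq> 0 \<and>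
    phiL (t!0) (t!1) (t!2) (t!3) ! 0 * phiL (t!0) (t!1) (t!2) (t!3) ! 1 * phiL (t!0) (t!1) (t!2) (t!3) ! 5 \<noteq> 0"
  by (simp add: Ef_def Nf_def phiL_def Let_def)

definition cayA :: "'a::field \<Rightarrow> 'a \<Rightarrow> 'a \<Rightarrow> 'a \<Rightarrow> 'a list" where
  "cayA e a0 a1 a2 = (let D = a0^2 + a1*a2; c = 1 - D in
     [e*(1 + D + 2*a0)/c, e*(2*a1)/c, e*(2*a2)/c, e*(1 + D - 2*a0)/c])"

definition PhiC :: "'a::field \<Rightarrow> 'a \<Rightarrow> 'a \<Rightarrow> 'a \<Rightarrow> 'a \<Rightarrow> 'a \<Rightarrow> 'a \<Rightarrow> 'a list" where
  "PhiC e1 e2 w0 w1 w2 s u = cayA e1 (s*w0) (s*w1) (s*w2) @ cayA e2 (u*w0) (u*w1) (u*w2)"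

lemma PhiC_in:
  fixes e1 :: "'k::field alg_closure"
  assumes e: "e1^2 = 1" "e2^2 = 1"
    and c: "1 - ((s*w0)^2 + (s*w1)*(s*w2)) \<noteq> 0" "1 - ((u*w0)^2 + (u*w1)*(u*w2)) \<noteq> 0"
  shows "PhiC e1 e2 w0 w1 w2 s u \<in> S_I"
proof -
  define c1 where "c1 = 1 - ((s*w0)^2 + (s*w1)*(s*w2))"
  define c2 where "c2 = 1 - ((u*w0)^2 + (u*w1)*(u*w2))"
  have c1: "c1 \<noteq> 0" and c2: "c2 \<noteq> 0" using c by (simp_all add: c1_def c2_def)
  have l: "PhiC e1 e2 w0 w1 w2 s u =
    [e1*(1 + (1 - c1) + 2*(s*w0))/c1, e1*(2*(s*w1))/c1, e1*(2*(s*w2))/c1, e1*(1 + (1 - c1) - 2*(s*w0))/c1,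
     e2*(1 + (1 - c2) + 2*(u*w0))/c2, e2*(2*(u*w1))/c2, e2*(2*(u*w2))/c2, e2*(1 + (1 - c2) - 2*(u*w0))/c2]"
    by (simp add: PhiC_def cayA_def Let_def c1_def c2_def)
  have c1e: "c1 = 1 - ((s*w0)^2 + (s*w1)*(s*w2))" and c2e: "c2 = 1 - ((u*w0)^2 + (u*w1)*(u*w2))"
    by (simp_all add: c1_def c2_def)
  show ?thesis unfolding S_I_iff l
    apply (simp add: field_simps c1 c2)
    apply (intro conjI)
    using e c1e c2e apply Groebner_Basis.algebra+
    done
qed

lemma cayA_inv:
  fixes x0 :: "'a::field_char_0"
  assumes det: "x0*x3 - x1*x2 = 1" and e: "e^2 = 1" and h: "2 + e*(x0+x3) \<noteq> 0"
  shows "1 - ((e*(x0-x3)/(2 + e*(x0+x3)))^2 + (2*e*x1/(2 + e*(x0+x3))) * (2*e*x2/(2 + e*(x0+x3)))) \<noteq> 0 \<and>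
    cayA e (e*(x0-x3)/(2 + e*(x0+x3))) (2*e*x1/(2 + e*(x0+x3))) (2*e*x2/(2 + e*(x0+x3))) = [x0,x1,x2,x3]"
proof -
  define hh where "hh = 2 + e*(x0+x3)"
  have h0: "hh \<noteq> 0" using h by (simp add: hh_def)
  have he: "hh = 2 + e*(x0+x3)" by (simp add: hh_def)
  have D: "(e*(x0-x3)/hh)^2 + (2*e*x1/hh) * (2*e*x2/hh) = 1 - 4/hh"
  proof -
    have "e^2*(x0-x3)^2 + 4*e^2*x1*x2 = hh^2 - 4*hh"
      using det e he by Groebner_Basis.algebra
    thus ?thesis using h0 by (simp add: field_simps power2_eq_square) Groebner_Basis.algebra
  qed
  have c: "1 - (1 - 4/hh) = 4/hh" by simp
  have c0: "4/hh \<noteq> 0" using h0 by simp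
  have E0: "e*(1 + (1 - 4/hh) + 2*(e*(x0-x3)/hh)) / (4/hh) = x0"
  proof -
    have "e*(2*hh - 4 + 2*e*(x0-x3)) = 4*x0" using e he by Groebner_Basis.algebra
    thus ?thesis using h0 by (simp add: field_simps) Groebner_Basis.algebra
  qed
  have E3: "e*(1 + (1 - 4/hh) - 2*(e*(x0-x3)/hh)) / (4/hh) = x3"
  proof -
    have "e*(2*hh - 4 - 2*e*(x0-x3)) = 4*x3" using e he by Groebner_Basis.algebra
    thus ?thesis using h0 by (simp add: field_simps) Groebner_Basis.algebra
  qed
  have E1: "e*(2*(2*e*x1/hh)) / (4/hh) = x1" using h0 e by (simp add: field_simps power2_eq_square)
  have E2: "e*(2*(2*e*x2/hh)) / (4/hh) = x2" using h0 e by (simp add: field_simps power2_eq_square)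
  show ?thesis unfolding hh_def[symmetric] cayA_def Let_def D c
    using c0 E0 E1 E2 E3 by simp
qed

lemma prop_vec:
  fixes a0 :: "'a::field"
  assumes "\<not> (a0 = 0 \<and> a1 = 0 \<and> a2 = 0)" "a1*b2 = a2*b1" "a0*b1 = a1*b0" "a0*b2 = a2*b0"
  shows "\<exists>\<beta>. b0 = \<beta>*a0 \<and> b1 = \<beta>*a1 \<and> b2 = \<beta>*a2"
proof (cases "a0 = 0")
  case False
  then show ?thesis using assms by (intro exI[of _ "b0/a0"]) (auto simp: field_simps)
next
  case a0: True
  show ?thesis
  proof (cases "a1 = 0")
    case False
    then show ?thesis using assms by (intro exI[of _ "b1/a1"]) (auto simp: field_simps)
  next
    case True
    then have "a2 \<noteq> 0" using assms a0 by auto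
    then show ?thesis using assms by (intro exI[of _ "b2/a2"]) (auto simp: field_simps)
  qed
qed

lemma choose_e:
  fixes T :: "'a::field_char_0"
  shows "\<exists>e. e^2 = 1 \<and> 2 + e*T \<noteq> 0"
proof (cases "2 + T = 0")
  case True
  then have "T = -2" by (simp add: eq_neg_iff_add_eq_0 add.commute)
  then show ?thesis by (intro exI[of _ "-1"]) simp
next
  case False
  then show ?thesis by (intro exI[of _ 1]) simp
qed

lemma list8: "length x = 8 \<Longrightarrow> x = [x!0,x!1,x!2,x!3,x!4,x!5,x!6,x!7]"
  by (simp add: list_eq_iff_nth_eq less_Suc_eq numeral_eq_Suc nth_Cons split: nat.splits)

lemma PhiC_surj:
  fixes x :: "'k::field_char_0 alg_closure list"
  assumes "x \<in> S_I"
  shows "\<exists>e1 e2 w0 w1 w2 s u. e1^2 = 1 \<and> e2^2 = 1 \<and> 1 - ((s*w0)^2 + (s*w1)*(s*w2)) \<noteq> 0 \<and>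
     1 - ((u*w0)^2 + (u*w1)*(u*w2)) \<noteq> 0 \<and> PhiC e1 e2 w0 w1 w2 s u = x"
proof -
  define x0 where "x0 = x!0"
  define x1 where "x1 = x!1"
  define x2 where "x2 = x!2"
  define x3 where "x3 = x!3"
  define x4 where "x4 = x!4"
  define x5 where "x5 = x!5"
  define x6 where "x6 = x!6"
  define x7 where "x7 = x!7"
  have xe: "x = [x0,x1,x2,x3,x4,x5,x6,x7]"
    using assms list8 unfolding S_I_iff x0_def x1_def x2_def x3_def x4_def x5_def x6_def x7_def by blast
  have eq: "x0*x3 - x1*x2 = 1" "x4*x7 - x5*x6 = 1" "x1*x6 = x5*x2"
     "x0*x5 + x1*x7 = x4*x1 + x5*x3" "x2*x4 + x3*x6 = x6*x0 + x7*x2"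
    using assms unfolding S_I_iff xe by simp_all
  obtain e1 where e1: "e1^2 = 1" "2 + e1*(x0+x3) \<noteq> 0" using choose_e by blast
  obtain e2 where e2: "e2^2 = 1" "2 + e2*(x4+x7) \<noteq> 0" using choose_e by blast
  define h1 where "h1 = 2 + e1*(x0+x3)"
  define h2 where "h2 = 2 + e2*(x4+x7)"
  have h1: "h1 \<noteq> 0" and h2: "h2 \<noteq> 0" using e1 e2 by (simp_all add: h1_def h2_def)
  define a0 where "a0 = e1*(x0-x3)/h1"
  define a1 where "a1 = 2*e1*x1/h1"
  define a2 where "a2 = 2*e1*x2/h1"
  define b0 where "b0 = e2*(x4-x7)/h2"
  define b1 where "b1 = 2*e2*x5/h2"
  define b2 where "b2 = 2*e2*x6/h2"
  have CA: "1 - (a0^2 + a1*a2) \<noteq> 0" "cayA e1 a0 a1 a2 = [x0,x1,x2,x3]"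
    using cayA_inv[OF eq(1) e1] unfolding a0_def a1_def a2_def h1_def by auto
  have CB: "1 - (b0^2 + b1*b2) \<noteq> 0" "cayA e2 b0 b1 b2 = [x4,x5,x6,x7]"
    using cayA_inv[OF eq(2) e2] unfolding b0_def b1_def b2_def h2_def by auto
  have cr1: "a1*b2 = a2*b1"
  proof -
    have "x1*x6 = x2*x5" using eq(3) by (simp add: mult.commute)
    then show ?thesis unfolding a1_def a2_def b1_def b2_def using h1 h2 by (simp add: field_simps)
  qed
  have cr2: "a0*b1 = a1*b0"
  proof -
    have "(x0-x3)*x5 = x1*(x4-x7)" using eq(4) by Groebner_Basis.algebra
    then show ?thesis unfolding a0_def a1_def b0_def b1_def using h1 h2
      by (simp add: field_simps) Groebner_Basis.algebra
  qed
  have cr3: "a0*b2 = a2*b0"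
  proof -
    have "(x0-x3)*x6 = x2*(x4-x7)" using eq(5) by Groebner_Basis.algebra
    then show ?thesis unfolding a0_def a2_def b0_def b2_def using h1 h2
      by (simp add: field_simps) Groebner_Basis.algebra
  qed
  show ?thesis
  proof (cases "a0 = 0 \<and> a1 = 0 \<and> a2 = 0")
    case True
    have c0: "cayA e1 0 0 0 = [x0,x1,x2,x3]" using CA(2) True by simp
    have "PhiC e1 e2 b0 b1 b2 0 1 = x"
      unfolding PhiC_def mult_zero_left mult_1_left c0 CB(2) xe by simp
    moreover have "1 - ((0*b0)^2 + (0*b1)*(0*b2)) \<noteq> (0::'k alg_closure)" by simp
    moreover have "1 - ((1*b0)^2 + (1*b1)*(1*b2)) \<noteq> (0::'k alg_closure)" using CB(1) by simp
    ultimately show ?thesis using e1(1) e2(1) by blast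
  next
    case False
    obtain \<beta> where \<beta>: "b0 = \<beta>*a0" "b1 = \<beta>*a1" "b2 = \<beta>*a2"
      using prop_vec[OF False cr1 cr2 cr3] by blast
    have "PhiC e1 e2 a0 a1 a2 1 \<beta> = x"
      unfolding PhiC_def mult_1_left CA(2) \<beta>[symmetric] CB(2) xe by simp
    moreover have "1 - ((1*a0)^2 + (1*a1)*(1*a2)) \<noteq> (0::'k alg_closure)" using CA(1) by simp
    moreover have "1 - ((\<beta>*a0)^2 + (\<beta>*a1)*(\<beta>*a2)) \<noteq> (0::'k alg_closure)" using CB(1) unfolding \<beta> by simp
    ultimately show ?thesis using e1(1) e2(1) by blast
  qed
qed

lemma cases_lt4: "(i::nat) = 0 \<or> i = 1 \<or> i = 2 \<or> i = 3 \<or> 4 \<le> i" by arith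

lemma cayA_good:
  fixes A0 :: "'a::field \<Rightarrow> 'a"
  assumes g: "good_at b A0" "good_at b A1" "good_at b A2"
    and c: "1 - ((A0 b)^2 + A1 b * A2 b) \<noteq> 0"
  shows "good_at b (\<lambda>r. cayA e (A0 r) (A1 r) (A2 r) ! i)"
proof -
  have len: "length (cayA e a0 a1 a2) = 4" for a0 a1 a2 :: 'a by (simp add: cayA_def Let_def)
  from cases_lt4[of i] show ?thesis
  proof (elim disjE)
    assume "4 \<le> i"
    then have "cayA e (A0 r) (A1 r) (A2 r) ! i = [] ! (i - 4)" for r
      using nth_beyond[of "cayA e (A0 r) (A1 r) (A2 r)" i] len by simp
    then show ?thesis by (simp add: good_const)
  qed (simp_all add: cayA_def Let_def;
       (intro good_add good_mult good_diff good_div good_power good_const g)?; use c in simp)+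
qed

lemma PhiC_good:
  fixes W0 :: "'a::field \<Rightarrow> 'a"
  assumes g: "good_at b W0" "good_at b W1" "good_at b W2" "good_at b S" "good_at b U"
    and c1: "1 - ((S b * W0 b)^2 + (S b * W1 b) * (S b * W2 b)) \<noteq> 0"
    and c2: "1 - ((U b * W0 b)^2 + (U b * W1 b) * (U b * W2 b)) \<noteq> 0"
  shows "good_at b (\<lambda>r. PhiC e1 e2 (W0 r) (W1 r) (W2 r) (S r) (U r) ! i)"
proof -
  have len: "length (cayA e a0 a1 a2) = 4" for e a0 a1 a2 :: 'a by (simp add: cayA_def Let_def)
  show ?thesis
  proof (cases "i < 4")
    case True
    then show ?thesis unfolding PhiC_def nth_append len using g c1
      by (simp, intro cayA_good good_mult) auto
  next
    case False
    then show ?thesis unfolding PhiC_def nth_append len using g c2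
      by (simp, intro cayA_good good_mult) auto
  qed
qed

lemma psiL_nth:
  "psiL x ! 0 = x!0 * (x!0 * x!1 * x!5) / (x!0 * x!1 * x!5)"
  "psiL x ! 1 = x!1 * (x!0 * x!1 * x!5) / (x!0 * x!1 * x!5)"
  "psiL x ! 2 = x!2 * (x!0 * x!1 * x!5) / (x!0 * x!1 * x!5)"
  "psiL x ! 3 = x!0 * x!1 * (x!1 * (x!4 - 1) - x!0 * x!5) / (x!0 * x!1 * x!5)"
  by (simp_all add: psiL_def Let_def)

lemma psiL_good:
  fixes Xs :: "'a::field \<Rightarrow> 'a list"
  assumes g: "\<And>i. good_at b (\<lambda>r. Xs r ! i)" and q: "Xs b ! 0 * Xs b ! 1 * Xs b ! 5 \<noteq> 0"
  shows "good_at b (\<lambda>r. psiL (Xs r) ! i)"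
proof -
  have len: "length (psiL x) = 4" for x :: "'a list" by (simp add: psiL_def Let_def)
  from cases_lt4[of i] show ?thesis
  proof (elim disjE)
    assume "4 \<le> i"
    then have "psiL (Xs r) ! i = [] ! (i - 4)" for r
      using nth_beyond[of "psiL (Xs r)" i] len by simp
    then show ?thesis by (simp add: good_const)
  qed (simp_all only: psiL_nth;
       (intro good_add good_mult good_diff good_div good_power good_const g)?; use q in simp)+
qed

lemma good_lin: "good_at b (\<lambda>r. (w::'a::field) + r * (z - w))"
  by (intro good_add good_mult good_const good_id)

lemma density:
  fixes p :: "'k::field_char_0 alg_closure mpoly" and x :: "'k alg_closure list"
  assumes H: "\<And>y. y \<in> S_I \<Longrightarrow> y!0 * y!1 * y!5 \<noteq> 0 \<Longrightarrow>
      psiL y ! 0 * Ef (psiL y ! 0) (psiL y ! 1) (psiL y ! 2) (psiL y ! 3) \<noteq> 0 \<Longrightarrow> meval id p y = 0"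
    and x: "x \<in> S_I"
  shows "meval id p x = 0"
proof -
  obtain e1 e2 w0 w1 w2 s u where e: "e1^2 = 1" "e2^2 = 1"
    and c: "1 - ((s*w0)^2 + (s*w1)*(s*w2)) \<noteq> 0" "1 - ((u*w0)^2 + (u*w1)*(u*w2)) \<noteq> 0"
    and px: "PhiC e1 e2 w0 w1 w2 s u = x"
    using PhiC_surj[OF x] by blast
  have e0: "e1 \<noteq> 0" "e2 \<noteq> 0" using e by auto
  define L0 where "L0 = (\<lambda>r::'k alg_closure. w0 + r*(0 - w0))"
  define L1 where "L1 = (\<lambda>r::'k alg_closure. w1 + r*(1 - w1))"
  define L2 where "L2 = (\<lambda>r::'k alg_closure. w2 + r*(2 - w2))"
  define LS where "LS = (\<lambda>r::'k alg_closure. s + r*(1 - s))"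
  define LU where "LU = (\<lambda>r::'k alg_closure. u + r*(1 - u))"
  define Cur where "Cur = (\<lambda>r. PhiC e1 e2 (L0 r) (L1 r) (L2 r) (LS r) (LU r))"
  have gL: "good_at b L0" "good_at b L1" "good_at b L2" "good_at b LS" "good_at b LU" for b
    unfolding L0_def L1_def L2_def LS_def LU_def by (simp_all only: good_lin)
  have L_at0: "L0 0 = w0" "L1 0 = w1" "L2 0 = w2" "LS 0 = s" "LU 0 = u"
    by (simp_all add: L0_def L1_def L2_def LS_def LU_def)
  have L_at1: "L0 1 = 0" "L1 1 = 1" "L2 1 = 2" "LS 1 = 1" "LU 1 = 1"
    by (simp_all add: L0_def L1_def L2_def LS_def LU_def)
  have gC0: "good_at 0 (\<lambda>r. Cur r ! i)" for i
    unfolding Cur_def by (rule PhiC_good) (use gL c in \<open>simp_all add: L_at0\<close>)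
  have gC1: "good_at 1 (\<lambda>r. Cur r ! i)" for i
    unfolding Cur_def by (rule PhiC_good) (use gL in \<open>simp_all add: L_at1\<close>)
  have cur1: "Cur 1 = [-3*e1, -2*e1, -4*e1, -3*e1, -3*e2, -2*e2, -4*e2, -3*e2]"
    by (simp add: Cur_def PhiC_def cayA_def L_at1)
  define Q where "Q = (\<lambda>r. Cur r ! 0 * Cur r ! 1 * Cur r ! 5)"
  have gQ: "good_at 1 Q" unfolding Q_def by (intro good_mult gC1)
  have Q1: "Q 1 \<noteq> 0" unfolding Q_def cur1 using e0 by simp
  have Q1': "Cur 1 ! 0 * Cur 1 ! 1 * Cur 1 ! 5 \<noteq> 0" using Q1 by (simp add: Q_def)
  have gP: "good_at 1 (\<lambda>r. psiL (Cur r) ! i)" for i by (rule psiL_good[OF gC1 Q1'])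
  define G where "G = (\<lambda>r. psiL (Cur r) ! 0 * Ef (psiL (Cur r) ! 0) (psiL (Cur r) ! 1) (psiL (Cur r) ! 2) (psiL (Cur r) ! 3))"
  have gG: "good_at 1 G" unfolding G_def Ef_def
    by (intro good_add good_mult good_power good_const gP)
  have G1: "G 1 \<noteq> 0"
  proof -
    have "e1 = 1 \<or> e1 = -1" "e2 = 1 \<or> e2 = -1" using e by (simp_all add: power2_eq_1_iff)
    then show ?thesis unfolding G_def cur1
      by (elim disjE) (simp_all add: psiL_def Ef_def Let_def)
  qed
  define C1 where "C1 = (\<lambda>r. 1 - ((LS r * L0 r)^2 + (LS r * L1 r)*(LS r * L2 r)))"
  define C2 where "C2 = (\<lambda>r. 1 - ((LU r * L0 r)^2 + (LU r * L1 r)*(LU r * L2 r)))"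
  have gC: "good_at 1 C1" "good_at 1 C2" unfolding C1_def C2_def
    by (intro good_add good_mult good_diff good_power good_const gL)+
  have C1: "C1 1 \<noteq> 0" "C2 1 \<noteq> 0" by (simp_all add: C1_def C2_def L_at1)
  define B where "B = {r. C1 r = 0} \<union> {r. C2 r = 0} \<union> {r. Q r = 0} \<union> {r. G r = 0}"
  have finB: "finite B" unfolding B_def
    using good_cofinite[OF gC(1) C1(1)] good_cofinite[OF gC(2) C1(2)]
          good_cofinite[OF gQ Q1] good_cofinite[OF gG G1] by simp
  have van: "meval id p (Cur r) = 0" if "r \<notin> B" for r
  proof -
    have nz: "C1 r \<noteq> 0" "C2 r \<noteq> 0" "Q r \<noteq> 0" "G r \<noteq> 0" using that by (auto simp: B_def)
    have "Cur r \<in> S_I" unfolding Cur_def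
      by (rule PhiC_in[OF e]) (use nz in \<open>simp_all add: C1_def C2_def\<close>)
    then show ?thesis using H nz by (simp add: Q_def G_def)
  qed
  have "meval id p (Cur 0) = 0"
    by (rule good_vanish[OF good_meval[OF gC0] finB]) (use van in blast)
  then show ?thesis using px by (simp add: Cur_def L_at0)
qed

lemma list4: "length t = 4 \<Longrightarrow> t = [t!0,t!1,t!2,t!3]"
  by (simp add: list_eq_iff_nth_eq less_Suc_eq numeral_eq_Suc nth_Cons split: nat.splits)

theorem proposition3p8:
  shows "k_rational_of_dim 4 8 (S_I :: 'k::field_char_0 alg_closure list set)"
proof -
  have phi: "(\<lambda>t. map (\<lambda>i. meval to_ac ((fl :: 'k mpoly list) ! i) t / meval to_ac gm t) [0..<8])
     = (\<lambda>t. phiL (t!0) (t!1) (t!2) (t!3))"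
    by (rule ext) (rule phi_eval)
  have psi: "(\<lambda>x. map (\<lambda>j. meval to_ac ((pl :: 'k mpoly list) ! j) x / meval to_ac qm x) [0..<4])
     = psiL"
    by (rule ext) (rule psi_eval)
  have psi_nz: "psiL x = [x!0, x!1, x!2, (x!1*(x!4-1) - x!0*x!5)/x!5]"
    if "x!0 * x!1 * x!5 \<noteq> (0::'k alg_closure)" for x
    using that by (simp add: psiL_def Let_def field_simps)
  show ?thesis
    unfolding k_rational_of_dim_def
    apply (intro conjI)
     apply (auto simp: S_I_iff)[1]
    apply (rule exI[of _ "\<lambda>i. fl ! i"], rule exI[of _ gm], rule exI[of _ "\<lambda>j. pl ! j"], rule exI[of _ qm])
    apply (unfold Let_def)
    apply (simp only: phi_eval psi_eval)
    apply (simp only: meval_gm meval_qm)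
    apply (intro conjI ballI)
    subgoal using poly_in_fl by auto
    subgoal by (rule poly_in_gm)
    subgoal using poly_in_pl by auto
    subgoal by (rule poly_in_qm)
    subgoal for t by (intro phiL_in) simp
    subgoal
      unfolding zariski_dense_in_def
      apply (intro conjI allI impI ballI)
       apply blast
      subgoal for p x
        by (rule density) (auto simp: psiL_def Let_def)
      done
    subgoal for x
    proof -
      assume x: "x \<in> {x \<in> S_I. x!0 * x!1 * x!5 \<noteq> 0 \<and>
            psiL x \<in> {t. length t = 4 \<and> t!0 * Ef (t!0) (t!1) (t!2) (t!3) \<noteq> 0}}"
      then have q: "x!0 * x!1 * x!5 \<noteq> 0" and xS: "x \<in> S_I" by auto
      have g: "x!0 * Ef (x!0) (x!1) (x!2) ((x!1*(x!4-1) - x!0*x!5)/x!5) \<noteq> 0"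
        using x psi_nz[OF q] by simp
      show "phiL (psiL x ! 0) (psiL x ! 1) (psiL x ! 2) (psiL x ! 3) = x"
        using phi_psi[OF xS q refl g] unfolding psi_nz[OF q] by simp
    qed
    subgoal
    proof -
      have "[1, 1, -1, 0 :: 'k alg_closure] \<in> {t \<in> {t. length t = 4 \<and> t!0 * Ef (t!0) (t!1) (t!2) (t!3) \<noteq> 0}.
             phiL (t!0) (t!1) (t!2) (t!3) ! 0 * phiL (t!0) (t!1) (t!2) (t!3) ! 1 * phiL (t!0) (t!1) (t!2) (t!3) ! 5 \<noteq> 0}"
        using W'_witness[where 'k='k] by (simp add: Let_def)
      then show ?thesis by blast
    qed
    subgoal for t
    proof -
      assume t: "t \<in> {t \<in> {t. length t = 4 \<and> t!0 * Ef (t!0) (t!1) (t!2) (t!3) \<noteq> 0}.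
             phiL (t!0) (t!1) (t!2) (t!3) ! 0 * phiL (t!0) (t!1) (t!2) (t!3) ! 1 * phiL (t!0) (t!1) (t!2) (t!3) ! 5 \<noteq> 0}"
      then have "psiL (phiL (t!0) (t!1) (t!2) (t!3)) = [t!0, t!1, t!2, t!3]"
        by (intro psi_phi) auto
      also have "\<dots> = t" using t list4[of t] by simp
      finally show ?thesis .
    qed
    done
qed


end
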